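(* Let $D\ge2$ and $2\le m\le D$ be integers. Let $P\in\mathbb{C}[x]$ have the form $P(x)=ax^D+bx^{D-m}+(\text{terms of degree}<D-m)$ with $ab\neq0$ (so the coefficients of $x^{D-1},\dots,x^{D-m+1}$ vanish). Then for every positive integer $n$, the iterate $P^n$ has the form $\alpha x^{D^n}+\beta x^{D^n-m}+(\text{terms of degree}<D^n-m)$ with $\alpha\beta\neq0$.
   Context: $P^n$ denotes the $n$-th compositional iterate of $P$. *)

theory Defs
  imports "HOL-Computational_Algebra.Polynomial" Complex_Main
begin

definition poly_iter :: "'a::comm_semiring_1 poly \<Rightarrow> nat \<Rightarrow> 'a poly" where
  "poly_iter P n = ((\<lambda>q. pcompose P q) ^^ n) [:0, 1:]"

end

theory Submission
  imports Defs
begin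

definition lowdeg :: "complex poly \<Rightarrow> nat \<Rightarrow> bool" where
  "lowdeg R d \<longleftrightarrow> (\<forall>k\<ge>d. coeff R k = 0)"

lemma lowdeg_add: "lowdeg R d \<Longrightarrow> lowdeg S d \<Longrightarrow> lowdeg (R + S) d"
  by (simp add: lowdeg_def)

lemma lowdeg_smult: "lowdeg R d \<Longrightarrow> lowdeg (smult c R) d"
  by (simp add: lowdeg_def)

lemma lowdeg_mono: "lowdeg R d \<Longrightarrow> d \<le> d' \<Longrightarrow> lowdeg R d'"
  by (simp add: lowdeg_def)

lemma lowdeg_monom: "k < d \<Longrightarrow> lowdeg (monom c k) d"
  by (simp add: lowdeg_def coeff_monom)

lemma lowdeg_degree: "degree S < d \<Longrightarrow> lowdeg S d"
  by (simp add: lowdeg_def coeff_eq_0)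

lemma lowdeg_mult: assumes "lowdeg R d" "degree S \<le> e" shows "lowdeg (R * S) (d + e)"
  unfolding lowdeg_def
proof (intro allI impI)
  fix k assume k: "d + e \<le> k"
  have "coeff R i * coeff S (k - i) = 0" if "i \<le> k" for i
  proof (cases "i < d")
    case True
    then have "k - i > e" using k by arith
    then have "coeff S (k - i) = 0" using assms(2) by (simp add: coeff_eq_0)
    then show ?thesis by simp
  next
    case False
    then show ?thesis using assms(1) by (simp add: lowdeg_def)
  qed
  then show "coeff (R * S) k = 0" unfolding coeff_mult by (intro sum.neutral) auto
qed

lemma lowdeg_mult': "lowdeg R d \<Longrightarrow> degree S \<le> e \<Longrightarrow> lowdeg (S * R) (d + e)"
  using lowdeg_mult by (simp add: mult.commute)

lemma pcompose_pow: "pcompose ([:0, 1:] ^ n) q = q ^ n"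
proof (induct n)
  case 0 then show ?case by (simp add: pcompose_1)
next
  case (Suc n)
  have "pcompose ([:0, 1:] ^ Suc n) q = pcompose [:0, 1:] q * pcompose ([:0, 1:] ^ n) q"
    by (simp only: power_Suc pcompose_mult)
  also have "pcompose [:0, 1:] q = q" by (simp add: pcompose_pCons)
  finally show ?case using Suc by simp
qed

lemma pcompose_monom: "pcompose (monom c n) q = smult c (q ^ n)"
  by (simp add: monom_altdef pcompose_smult pcompose_pow)

lemma power_form:
  fixes Q R :: "complex poly"
  assumes Q: "Q = monom \<alpha> E + monom \<beta> (E - m) + R" and R: "lowdeg R (E - m)"
    and mE: "m \<le> E" and m1: "1 \<le> m"
  shows "j \<ge> 1 \<Longrightarrow> \<exists>Rj. Q ^ j = monom (\<alpha> ^ j) (j * E) + monom (of_nat j * \<alpha> ^ (j - 1) * \<beta>) (j * E - m) + Rj \<and> lowdeg Rj (j * E - m)"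
proof (induction j rule: dec_induct)
  case base
  then show ?case using Q R by auto
next
  case (step j)
  then obtain Rj where Rj: "Q ^ j = monom (\<alpha> ^ j) (j * E) + monom (of_nat j * \<alpha> ^ (j - 1) * \<beta>) (j * E - m) + Rj"
    and lRj: "lowdeg Rj (j * E - m)" by blast
  define A where "A = monom (\<alpha> ^ j) (j * E)"
  define B where "B = monom (of_nat j * \<alpha> ^ (j - 1) * \<beta>) (j * E - m)"
  define a where "a = monom \<alpha> E"
  define b where "b = monom \<beta> (E - m)"
  have jE: "m \<le> j * E" using mE step(1) by (metis dual_order.trans mult_le_mono1 mult_1)
  have "Q ^ Suc j = Q ^ j * Q" by (simp add: mult.commute)
  also have "\<dots> = (A + B + Rj) * (a + b + R)"
    unfolding Rj A_def B_def a_def b_def by (simp add: Q)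
  also have "\<dots> = A * a + (A * b + B * a) + (A * R + B * b + B * R + Rj * (a + b + R))"
    by (simp add: algebra_simps)
  finally have e1: "Q ^ Suc j = A * a + (A * b + B * a) + (A * R + B * b + B * R + Rj * Q)"
    by (simp add: Q a_def b_def)
  have e2: "A * a = monom (\<alpha> ^ Suc j) (Suc j * E)"
    unfolding A_def a_def by (simp add: mult_monom algebra_simps)
  have "A * b + B * a = monom (\<alpha> ^ j * \<beta>) (Suc j * E - m) + monom (of_nat j * \<alpha> ^ j * \<beta>) (Suc j * E - m)"
  proof -
    have "j * E + (E - m) = Suc j * E - m" using mE by simp
    moreover have "j * E - m + E = Suc j * E - m" using jE by simp
    moreover have "of_nat j * \<alpha> ^ (j - 1) * \<beta> * \<alpha> = of_nat j * \<alpha> ^ j * \<beta>"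
      using step(1) by (cases j) (auto simp: algebra_simps)
    ultimately show ?thesis unfolding A_def B_def a_def b_def by (simp add: mult_monom)
  qed
  also have "\<dots> = monom (of_nat (Suc j) * \<alpha> ^ (Suc j - 1) * \<beta>) (Suc j * E - m)"
    by (simp add: add_monom algebra_simps)
  finally have e3: "A * b + B * a = \<dots>" .
  have l1: "lowdeg (A * R) (Suc j * E - m)"
  proof -
    have "lowdeg (A * R) ((E - m) + j * E)" by (rule lowdeg_mult') (use R in \<open>auto simp: A_def degree_monom_le\<close>)
    then show ?thesis using mE by (simp add: algebra_simps)
  qed
  have l2: "lowdeg (B * b) (Suc j * E - m)"
    unfolding B_def b_def mult_monom using jE mE m1 by (intro lowdeg_monom) simp
  have l3: "lowdeg (B * R) (Suc j * E - m)"
  proof -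
    have "lowdeg (B * R) ((E - m) + (j * E - m))" by (rule lowdeg_mult') (use R in \<open>auto simp: B_def degree_monom_le\<close>)
    then show ?thesis by (rule lowdeg_mono) (use jE mE in simp)
  qed
  have dQ: "degree Q \<le> E"
    unfolding Q using R
    by (intro degree_add_le degree_monom_le order.trans[OF degree_monom_le]) (auto simp: lowdeg_def intro: degree_le)
  have l4: "lowdeg (Rj * Q) (Suc j * E - m)"
  proof -
    have "lowdeg (Rj * Q) ((j * E - m) + E)" by (rule lowdeg_mult[OF lRj dQ])
    then show ?thesis using jE by (simp add: add.commute)
  qed
  show ?case
    by (rule exI[of _ "A * R + B * b + B * R + Rj * Q"])
      (unfold e1 e2 e3, intro conjI refl lowdeg_add l1 l2 l3 l4)
qed

lemma comp_form:
  fixes P Q R0 R :: "complex poly"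
  assumes P: "P = monom a D + monom b (D - m) + R0" and R0: "lowdeg R0 (D - m)"
    and ab: "a \<noteq> 0" "b \<noteq> 0" and m: "2 \<le> m" "m \<le> D"
    and Q: "Q = monom \<alpha> E + monom \<beta> (E - m) + R" and R: "lowdeg R (E - m)"
    and al: "\<alpha> \<noteq> 0" "\<beta> \<noteq> 0" and DE: "D \<le> E"
  shows "\<exists>\<alpha>' \<beta>' R'. \<alpha>' \<noteq> 0 \<and> \<beta>' \<noteq> 0 \<and> lowdeg R' (D * E - m) \<and>
     pcompose P Q = monom \<alpha>' (D * E) + monom \<beta>' (D * E - m) + R'"
proof -
  have D1: "D \<ge> 1" using m by simp
  obtain RD where RD: "Q ^ D = monom (\<alpha> ^ D) (D * E) + monom (of_nat D * \<alpha> ^ (D - 1) * \<beta>) (D * E - m) + RD"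
    and lRD: "lowdeg RD (D * E - m)"
    using power_form[OF Q R _ _ D1] m DE by auto
  have dQ: "degree Q \<le> E"
    unfolding Q using R
    by (intro degree_add_le degree_monom_le order.trans[OF degree_monom_le]) (auto simp: lowdeg_def intro: degree_le)
  have key: "(D - m) * E + 1 \<le> D * E - m"
  proof -
    have "(D - m) * E + m * E = D * E" using m(2) by (simp only: add_mult_distrib[symmetric] le_add_diff_inverse2)
    moreover have "m * E \<ge> 2 * m" using DE m by simp
    ultimately show ?thesis using m by linarith
  qed
  have l1: "lowdeg (smult b (Q ^ (D - m))) (D * E - m)"
  proof -
    have "degree (smult b (Q ^ (D - m))) \<le> (D - m) * E"
      by (rule order.trans[OF degree_smult_le order.trans[OF degree_power_le]]) (use dQ in \<open>simp add: mult.commute\<close>)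
    then show ?thesis using key by (intro lowdeg_degree) linarith
  qed
  have l2: "lowdeg (pcompose R0 Q) (D * E - m)"
  proof (cases "R0 = 0")
    case True then show ?thesis by (simp add: lowdeg_def)
  next
    case False
    then have "coeff R0 (degree R0) \<noteq> 0" by simp
    then have dR: "degree R0 < D - m" using R0 unfolding lowdeg_def by (meson not_le)
    have "degree (pcompose R0 Q) \<le> degree R0 * E"
      using degree_pcompose_le[of R0 Q] dQ by (meson le_trans mult_le_mono2)
    also have "\<dots> < (D - m) * E" using dR DE m by simp
    finally show ?thesis using key by (intro lowdeg_degree) linarith
  qed
  have "pcompose P Q = smult a (Q ^ D) + smult b (Q ^ (D - m)) + pcompose R0 Q"
    by (simp add: P pcompose_add pcompose_monom)
  also have "\<dots> = monom (a * \<alpha> ^ D) (D * E) + monom (a * (of_nat D * \<alpha> ^ (D - 1) * \<beta>)) (D * E - m)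
      + (smult a RD + smult b (Q ^ (D - m)) + pcompose R0 Q)"
    by (simp add: RD smult_monom smult_add_right algebra_simps)
  finally show ?thesis using ab al D1 l1 l2 lowdeg_smult[OF lRD]
    by (intro exI[of _ "a * \<alpha> ^ D"] exI[of _ "a * (of_nat D * \<alpha> ^ (D - 1) * \<beta>)"]
        exI[of _ "smult a RD + smult b (Q ^ (D - m)) + pcompose R0 Q"]) (simp add: lowdeg_add)
qed

lemma extract_form:
  fixes Q R :: "complex poly"
  assumes Q: "Q = monom \<alpha> E + monom \<beta> (E - m) + R" and R: "lowdeg R (E - m)"
    and al: "\<alpha> \<noteq> 0" "\<beta> \<noteq> 0" and m: "1 \<le> m" "m \<le> E"
  shows "degree Q = E \<and> coeff Q E * coeff Q (E - m) \<noteq> 0 \<and> (\<forall>k. E - m < k \<and> k < E \<longrightarrow> coeff Q k = 0)"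
proof -
  have c: "coeff Q k = (if k = E then \<alpha> else 0) + (if k = E - m then \<beta> else 0) + coeff R k" for k
    by (simp add: Q coeff_monom)
  have cR: "k \<ge> E - m \<Longrightarrow> coeff R k = 0" for k using R by (simp add: lowdeg_def)
  have cE: "coeff Q E = \<alpha>" using c[of E] cR[of E] m by simp
  have cEm: "coeff Q (E - m) = \<beta>" using c[of "E - m"] cR[of "E - m"] m by simp
  have "degree Q \<le> E" by (rule degree_le) (use c cR m in auto)
  moreover have "E \<le> degree Q" using cE al by (simp add: le_degree)
  ultimately show ?thesis using cE cEm al c cR by auto
qed

lemma poly_iter_Suc: "poly_iter P (Suc n) = pcompose P (poly_iter P n)"
  by (simp add: poly_iter_def)

theorem lemma7p2:
  fixes P :: "complex poly" and D m :: nat and a b :: complex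
  assumes "D \<ge> 2" and "2 \<le> m" and "m \<le> D"
    and "degree P = D" and "coeff P D = a" and "coeff P (D - m) = b"
    and "a * b \<noteq> 0"
    and "\<forall>k. D - m < k \<and> k < D \<longrightarrow> coeff P k = 0"
  shows "\<forall>n::nat. n \<ge> 1 \<longrightarrow>
           degree (poly_iter P n) = D ^ n \<and>
           coeff (poly_iter P n) (D ^ n) * coeff (poly_iter P n) (D ^ n - m) \<noteq> 0 \<and>
           (\<forall>k. D ^ n - m < k \<and> k < D ^ n \<longrightarrow> coeff (poly_iter P n) k = 0)"
proof (intro allI impI)
  fix n :: nat assume n: "n \<ge> 1"
  define R0 where "R0 = P - monom a D - monom b (D - m)"
  have P: "P = monom a D + monom b (D - m) + R0" by (simp add: R0_def)
  have R0: "lowdeg R0 (D - m)"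
    unfolding lowdeg_def
  proof (intro allI impI)
    fix k assume k: "D - m \<le> k"
    show "coeff R0 k = 0"
    proof (cases "k > D")
      case True then show ?thesis using assms(4) assms(3) by (simp add: R0_def coeff_monom coeff_eq_0)
    next
      case False
      then consider "k = D" | "k = D - m" | "D - m < k \<and> k < D" using k by linarith
      then show ?thesis using assms(2-8) by cases (auto simp: R0_def coeff_monom)
    qed
  qed
  have ab: "a \<noteq> 0" "b \<noteq> 0" using assms(7) by auto
  have "\<exists>\<alpha> \<beta> R. \<alpha> \<noteq> 0 \<and> \<beta> \<noteq> 0 \<and> lowdeg R (D ^ n - m) \<and>
     poly_iter P n = monom \<alpha> (D ^ n) + monom \<beta> (D ^ n - m) + R"
    using n
  proof (induction n rule: dec_induct)
    case base
    then show ?case using P R0 ab by (auto simp: poly_iter_def)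
  next
    case (step j)
    then obtain \<alpha> \<beta> R where h: "\<alpha> \<noteq> 0" "\<beta> \<noteq> 0" "lowdeg R (D ^ j - m)"
      "poly_iter P j = monom \<alpha> (D ^ j) + monom \<beta> (D ^ j - m) + R" by blast
    have "D \<le> D ^ j" using step(1) assms(1)
      by (metis One_nat_def le_trans less_one not_le order_refl power_increasing power_one_right zero_le_numeral numeral_le_iff semiring_norm(69) assms(1) Suc_1 Suc_leD)
    from comp_form[OF P R0 ab assms(2,3) h(4) h(3) h(1,2) this]
    show ?case by (simp add: poly_iter_Suc)
  qed
  then obtain \<alpha> \<beta> R where h: "\<alpha> \<noteq> 0" "\<beta> \<noteq> 0" "lowdeg R (D ^ n - m)"
      "poly_iter P n = monom \<alpha> (D ^ n) + monom \<beta> (D ^ n - m) + R" by blast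
  have "m \<le> D ^ n" using assms(3) n assms(1)
    by (metis le_trans power_increasing power_one_right Suc_1 Suc_leD)
  from extract_form[OF h(4) h(3) h(1,2) _ this] assms(2) show "degree (poly_iter P n) = D ^ n \<and>
           coeff (poly_iter P n) (D ^ n) * coeff (poly_iter P n) (D ^ n - m) \<noteq> 0 \<and>
           (\<forall>k. D ^ n - m < k \<and> k < D ^ n \<longrightarrow> coeff (poly_iter P n) k = 0)" by simp
qed

end
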